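(* Let $\xi=e_{12}-e_{14}$ and $U=\{x\in\mathbb R^4:x^2+x^4>0\}$. On $U$ use the coordinates $\tilde x^1=x^2+x^4$, $\tilde x^2=-x^1/(x^2+x^4)$, $\tilde x^3=x^3$, $\tilde x^4=\tfrac12(x^1)^2+x^2(x^2+x^4)$ (a diffeomorphism of $U$ onto $(0,\infty)\times\mathbb R^3$). Then a smooth covector field $A$ on $U$ satisfies $L_\xi A=0$ if and only if there are smooth functions $C_1,C_2,C_3,B$ of $(\tilde x^1,\tilde x^3,\tilde x^4)\in(0,\infty)\times\mathbb R^2$ such that $$A_1=C_2\tilde x^2+C_3,\quad A_2=\tfrac12C_2(\tilde x^2)^2+C_3\tilde x^2+C_1,\quad A_3=B,\quad A_4=A_2+C_2 .$$
   Context: Work in $\mathbb R^4$ with Galilean (Cartesian) coordinates $x^1,x^2,x^3,x^4$ of Minkowski space (metric $\mathrm{diag}(-1,-1,-1,1)$). A potential on an open set $U\subseteq\mathbb R^4$ is a smooth covector field $A=A_i\,dx^i$; its components $A_i$ are always those with respect to the coordinates $x^i$, even when written as functions of other variables. For a vector field $\xi=\xi^k\partial_k$ the Lie derivative is $(L_\xi A)_i=\xi^k\partial_kA_i+A_k\partial_i\xi^k$. The vector fields used are, by components $(\xi^1,\xi^2,\xi^3,\xi^4)$: $e_1=(1,0,0,0)$, $e_2=(0,1,0,0)$, $e_3=(0,0,1,0)$, $e_4=(0,0,0,1)$, $e_{12}=(-x^2,x^1,0,0)$, $e_{13}=(x^3,0,-x^1,0)$, $e_{23}=(0,-x^3,x^2,0)$,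 $e_{14}=(x^4,0,0,x^1)$, $e_{24}=(0,x^4,0,x^2)$, $e_{34}=(0,0,x^4,x^3)$. A potential admits a family of vector fields if $L_\xi A=0$ for each $\xi$ in it (equivalently for every element of their linear span). "Functions" are smooth real functions; $\mathrm{ch}=\cosh$, $\mathrm{sh}=\sinh$. *)

theory Defs
  imports "HOL-Analysis.Analysis"
begin

text \<open>Points of R^4 are vectors of type real^4 with components x$1,...,x$4
  (the numeral type 4 has exactly the four distinct elements 1,2,3,4).\<close>

definition pd :: "'n::finite \<Rightarrow> (real^'n \<Rightarrow> real) \<Rightarrow> real^'n \<Rightarrow> real" where
  "pd k f x = frechet_derivative f (at x) (axis k 1)"

text \<open>Smooth (C-infinity) real functions on an open set S: differentiable on S,
  and all partial derivatives are again smooth on S (coinductively, i.e. all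
  iterated partial derivatives exist).\<close>
coinductive smooth_on :: "(real^'n::finite) set \<Rightarrow> (real^'n \<Rightarrow> real) \<Rightarrow> bool" where
  "f differentiable_on S \<Longrightarrow> (\<forall>k. smooth_on S (pd k f)) \<Longrightarrow> smooth_on S f"

definition lie_deriv :: "(4 \<Rightarrow> real^4 \<Rightarrow> real) \<Rightarrow> (4 \<Rightarrow> real^4 \<Rightarrow> real) \<Rightarrow> 4 \<Rightarrow> real^4 \<Rightarrow> real" where
  "lie_deriv \<xi> A i x = (\<Sum>k\<in>UNIV. \<xi> k x * pd k (A i) x + A k x * pd i (\<xi> k) x)"

definition e12 :: "4 \<Rightarrow> real^4 \<Rightarrow> real" where
  "e12 k x = (if k = 1 then - x$2 else if k = 2 then x$1 else 0)"

definition e14 :: "4 \<Rightarrow> real^4 \<Rightarrow> real" where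
  "e14 k x = (if k = 1 then x$4 else if k = 4 then x$1 else 0)"

end

theory Submission
  imports Defs
begin

lemma t1: fixes i :: "real^'m" assumes "i \<in> Basis" obtains j where "i = axis j 1"
  using assms unfolding Basis_vec_def by auto
lemma t2: "(x::real^'m) \<bullet> axis j 1 = x $ j"
  by (simp add: inner_axis)
lemma has_derivative_vec_lambdaI:
  fixes f :: "'a::real_normed_vector \<Rightarrow> real^'m"
  assumes "\<And>j. ((\<lambda>x. f x $ j) has_derivative (\<lambda>h. f' h $ j)) (at a within S)"
  shows "(f has_derivative f') (at a within S)"
proof (rule iffD2[OF has_derivative_componentwise_within], rule ballI)
  fix i :: "real^'m" assume "i \<in> Basis"
  then obtain j where j: "i = axis j 1" by (rule t1)
  show "((\<lambda>x. f x \<bullet> i) has_derivative (\<lambda>x. f' x \<bullet> i)) (at a within S)"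
    unfolding j t2 by (rule assms)
qed

lemma pd_eq:
  assumes "(f has_derivative f') (at x)"
  shows "pd k f x = f' (axis k 1)"
  using frechet_derivative_at[OF assms] by (simp add: pd_def)

lemma linear_axis_expand:
  fixes L :: "real^'n \<Rightarrow> real"
  assumes "linear L"
  shows "L v = (\<Sum>k\<in>UNIV. v$k * L (axis k 1))"
proof -
  have "L v = L (\<Sum>k\<in>UNIV. v$k *s axis k 1)" by (simp add: basis_expansion)
  also have "\<dots> = (\<Sum>k\<in>UNIV. v$k * L (axis k 1))"
    using assms by (simp add: linear_sum linear_cmul scalar_mult_eq_scaleR)
  finally show ?thesis .
qed

lemma pd_expand:
  fixes f :: "real^'n \<Rightarrow> real"
  assumes "f differentiable (at x)"
  shows "frechet_derivative f (at x) v = (\<Sum>k\<in>UNIV. v$k * pd k f x)"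
proof -
  have "linear (frechet_derivative f (at x))"
    using assms frechet_derivative_works has_derivative_linear by blast
  then show ?thesis unfolding pd_def by (rule linear_axis_expand)
qed

lemma smooth_const: "smooth_on S (\<lambda>x. c)"
proof -
  have "\<exists>c. h = (\<lambda>x. c)" if "h = (\<lambda>x. c)" for h using that by blast
  show ?thesis
  proof (coinduction arbitrary: c rule: smooth_on.coinduct)
    case smooth_on
    have "pd k (\<lambda>x. c) = (\<lambda>x. 0)" for k
      by (rule ext, rule pd_eq[where f'="\<lambda>_. 0", simplified]) (rule has_derivative_const)
    then show ?case by auto
  qed
qed


lemma diff_at_open:
  assumes "f differentiable_on S" "open S" "x \<in> S"
  shows "(f has_derivative frechet_derivative f (at x)) (at x)"
  using assms differentiable_on_eq_differentiable_at frechet_derivative_works by blast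

lemma pd_cong:
  assumes "open S" "x \<in> S" "\<forall>y\<in>S. h y = f y" "f differentiable (at x)"
  shows "pd k h x = pd k f x"
proof -
  have "(f has_derivative frechet_derivative f (at x)) (at x)"
    using assms(4) frechet_derivative_works by blast
  then have "(h has_derivative frechet_derivative f (at x)) (at x)"
    by (rule has_derivative_transform_within_open[OF _ assms(1,2)]) (use assms(3) in auto)
  then show ?thesis unfolding pd_def using frechet_derivative_at by metis
qed

lemma diffon_cong:
  assumes "open S" "\<forall>y\<in>S. h y = f y" "f differentiable_on S"
  shows "h differentiable_on S"
  unfolding differentiable_on_eq_differentiable_at[OF assms(1)]
proof
  fix x assume x: "x \<in> S"
  have "(f has_derivative frechet_derivative f (at x)) (at x)"
    using diff_at_open[OF assms(3,1) x] .
  then have "(h has_derivative frechet_derivative f (at x)) (at x)"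
    by (rule has_derivative_transform_within_open[OF _ assms(1) x]) (use assms(2) in auto)
  then show "h differentiable at x" unfolding differentiable_def by blast
qed

lemma smooth_onD: "smooth_on S f \<Longrightarrow> f differentiable_on S \<and> (\<forall>k. smooth_on S (pd k f))"
  by (erule smooth_on.cases) auto

inductive_set alg :: "(real^'n::finite) set \<Rightarrow> (real^'m::finite) set \<Rightarrow> (real^'n \<Rightarrow> real^'m) \<Rightarrow> (real^'n \<Rightarrow> real) set"
  for S U g where
  base: "smooth_on S h \<Longrightarrow> h \<in> alg S U g"
| const: "(\<lambda>y. c) \<in> alg S U g"
| comp: "smooth_on U f \<Longrightarrow> (\<lambda>y. f (g y)) \<in> alg S U g"
| add: "h1 \<in> alg S U g \<Longrightarrow> h2 \<in> alg S U g \<Longrightarrow> (\<lambda>y. h1 y + h2 y) \<in> alg S U g"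
| mult: "h1 \<in> alg S U g \<Longrightarrow> h2 \<in> alg S U g \<Longrightarrow> (\<lambda>y. h1 y * h2 y) \<in> alg S U g"
| cong: "h1 \<in> alg S U g \<Longrightarrow> \<forall>y\<in>S. h y = h1 y \<Longrightarrow> h \<in> alg S U g"

lemma alg_sum:
  assumes "finite J" "\<forall>j\<in>J. F j \<in> alg S U g"
  shows "(\<lambda>y. \<Sum>j\<in>J. F j y) \<in> alg S U g"
  using assms
proof (induction J rule: finite_induct)
  case empty
  then show ?case using alg.const[of 0] by simp
next
  case (insert x J)
  have f1: "F x \<in> alg S U g" using insert(4) by simp
  have f2: "(\<lambda>y. \<Sum>j\<in>J. F j y) \<in> alg S U g" using insert(3,4) by simp
  have "(\<lambda>y. F x y + (\<Sum>j\<in>J. F j y)) \<in> alg S U g"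
    using alg.add[OF f1 f2] .
  then show ?case using insert(1,2) by simp
qed

lemma alg_step:
  fixes g :: "real^'n::finite \<Rightarrow> real^'m::finite"
  assumes S: "open S" and U: "open U" and gS: "\<forall>y\<in>S. g y \<in> U"
    and gs: "\<forall>j. smooth_on S (\<lambda>y. g y $ j)"
    and h: "h \<in> alg S U g"
  shows "h differentiable_on S \<and> (\<forall>k. pd k h \<in> alg S U g)"
  using h
proof (induction rule: alg.induct)
  case (base h)
  then show ?case using smooth_onD[of S h] by (auto intro: alg.base)
next
  case (const c)
  have e: "pd k (\<lambda>x. c) = (\<lambda>x. 0)" for k
    by (rule ext, rule pd_eq[where f'="\<lambda>_. 0", simplified]) (rule has_derivative_const)
  show ?case by (simp add: e alg.const)
next
  case (comp f)
  have fd: "f differentiable_on U" and fs: "\<forall>j. smooth_on U (pd j f)"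
    using comp smooth_onD by auto
  have gd: "\<forall>j. (\<lambda>y. g y $ j) differentiable_on S" and gps: "\<forall>j k. smooth_on S (pd k (\<lambda>y. g y $ j))"
    using gs smooth_onD by auto
  define G where "G y = (\<lambda>v. \<chi> j. frechet_derivative (\<lambda>y. g y $ j) (at y) v)" for y
  have gder: "(g has_derivative G y) (at y)" if y: "y \<in> S" for y
    unfolding G_def
    by (rule has_derivative_vec_lambdaI, simp, rule diff_at_open[OF _ S y]) (use gd in auto)
  have fder: "(f has_derivative frechet_derivative f (at (g y))) (at (g y))" if y: "y \<in> S" for y
    using diff_at_open[OF fd U] gS y by auto
  have cder: "((\<lambda>y. f (g y)) has_derivative (\<lambda>v. frechet_derivative f (at (g y)) (G y v))) (at y)"
    if y: "y \<in> S" for y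
    using has_derivative_compose[OF gder[OF y] fder[OF y]] by simp
  have "(\<lambda>y. f (g y)) differentiable_on S"
    unfolding differentiable_on_eq_differentiable_at[OF S] differentiable_def using cder by blast
  moreover have "pd k (\<lambda>y. f (g y)) \<in> alg S U g" for k
  proof (rule alg.cong)
    show "(\<lambda>y. \<Sum>j\<in>UNIV. pd k (\<lambda>y. g y $ j) y * (\<lambda>y. pd j f (g y)) y) \<in> alg S U g"
      by (rule alg_sum, simp, rule ballI, rule alg.mult, rule alg.base, rule gps[rule_format], rule alg.comp, rule fs[rule_format])
    show "\<forall>y\<in>S. pd k (\<lambda>y. f (g y)) y = (\<Sum>j\<in>UNIV. pd k (\<lambda>y. g y $ j) y * pd j f (g y))"
    proof
      fix y assume y: "y \<in> S"
      have "pd k (\<lambda>y. f (g y)) y = frechet_derivative f (at (g y)) (G y (axis k 1))"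
        using pd_eq[OF cder[OF y]] .
      also have "\<dots> = (\<Sum>j\<in>UNIV. G y (axis k 1) $ j * pd j f (g y))"
        by (rule pd_expand) (use fder[OF y] differentiable_def in blast)
      also have "\<dots> = (\<Sum>j\<in>UNIV. pd k (\<lambda>y. g y $ j) y * pd j f (g y))"
        by (simp add: G_def pd_def)
      finally show "pd k (\<lambda>y. f (g y)) y = (\<Sum>j\<in>UNIV. pd k (\<lambda>y. g y $ j) y * pd j f (g y))" .
    qed
  qed
  ultimately show ?case by blast
next
  case (add h1 h2)
  have d1: "(h1 has_derivative frechet_derivative h1 (at y)) (at y)"
   and d2: "(h2 has_derivative frechet_derivative h2 (at y)) (at y)" if "y \<in> S" for y
    using diff_at_open[OF _ S that] add by auto
  have dd: "((\<lambda>y. h1 y + h2 y) has_derivative (\<lambda>v. frechet_derivative h1 (at y) v + frechet_derivative h2 (at y) v)) (at y)"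
    if "y \<in> S" for y
    using has_derivative_add[OF d1[OF that] d2[OF that]] .
  have "(\<lambda>y. h1 y + h2 y) differentiable_on S"
    unfolding differentiable_on_eq_differentiable_at[OF S] differentiable_def using dd by blast
  moreover have "pd k (\<lambda>y. h1 y + h2 y) \<in> alg S U g" for k
  proof (rule alg.cong)
    show "(\<lambda>y. pd k h1 y + pd k h2 y) \<in> alg S U g" using add by (auto intro: alg.add)
    show "\<forall>y\<in>S. pd k (\<lambda>y. h1 y + h2 y) y = pd k h1 y + pd k h2 y"
      using pd_eq[OF dd] by (simp add: pd_def)
  qed
  ultimately show ?case by blast
next
  case (mult h1 h2)
  have d1: "(h1 has_derivative frechet_derivative h1 (at y)) (at y)"
   and d2: "(h2 has_derivative frechet_derivative h2 (at y)) (at y)" if "y \<in> S" for y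
    using diff_at_open[OF _ S that] mult by auto
  have dd: "((\<lambda>y. h1 y * h2 y) has_derivative (\<lambda>v. h1 y * frechet_derivative h2 (at y) v + frechet_derivative h1 (at y) v * h2 y)) (at y)"
    if "y \<in> S" for y
    using has_derivative_mult[OF d1[OF that] d2[OF that]] .
  have "(\<lambda>y. h1 y * h2 y) differentiable_on S"
    unfolding differentiable_on_eq_differentiable_at[OF S] differentiable_def using dd by blast
  moreover have "pd k (\<lambda>y. h1 y * h2 y) \<in> alg S U g" for k
  proof (rule alg.cong)
    show "(\<lambda>y. h1 y * pd k h2 y + pd k h1 y * h2 y) \<in> alg S U g"
      using mult by (auto intro!: alg.add alg.mult)
    show "\<forall>y\<in>S. pd k (\<lambda>y. h1 y * h2 y) y = h1 y * pd k h2 y + pd k h1 y * h2 y"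
      using pd_eq[OF dd] by (simp add: pd_def)
  qed
  ultimately show ?case by blast
next
  case (cong h1 h)
  have "h differentiable_on S" using diffon_cong[OF S cong(2)] cong(3) by blast
  moreover have "pd k h \<in> alg S U g" for k
  proof (rule alg.cong)
    show "pd k h1 \<in> alg S U g" using cong by blast
    show "\<forall>y\<in>S. pd k h y = pd k h1 y"
      using pd_cong[OF S _ cong(2)] cong(3) S differentiable_on_eq_differentiable_at by blast
  qed
  ultimately show ?case by blast
qed

lemma alg_smooth:
  fixes g :: "real^'n::finite \<Rightarrow> real^'m::finite"
  assumes S: "open S" and U: "open U" and gS: "\<forall>y\<in>S. g y \<in> U"
    and gs: "\<forall>j. smooth_on S (\<lambda>y. g y $ j)"
    and h: "h \<in> alg S U g"
  shows "smooth_on S h"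
proof (rule smooth_on.coinduct[where X="\<lambda>S' h. S' = S \<and> h \<in> alg S U g"])
  show "S = S \<and> h \<in> alg S U g" using h by simp
next
  fix S0 h0 assume a: "S0 = S \<and> h0 \<in> alg S U g"
  have d: "h0 differentiable_on S \<and> (\<forall>k. pd k h0 \<in> alg S U g)"
    by (rule alg_step[OF S U gS gs]) (use a in simp)
  then show "\<exists>f Sa. S0 = Sa \<and> h0 = f \<and> f differentiable_on Sa \<and> (\<forall>k. (Sa = S \<and> pd k f \<in> alg S U g) \<or> smooth_on Sa (pd k f))"
    by (intro exI[of _ h0] exI[of _ S]) (use a d in auto)
qed




lemma smooth_comp:
  fixes g :: "real^'n::finite \<Rightarrow> real^'m::finite"
  assumes "open S" "open U" "\<forall>y\<in>S. g y \<in> U" "\<forall>j. smooth_on S (\<lambda>y. g y $ j)" "smooth_on U f"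
  shows "smooth_on S (\<lambda>y. f (g y))"
  by (rule alg_smooth[OF assms(1-4)]) (rule alg.comp[OF assms(5)])

lemma smooth_add:
  fixes S :: "(real^'n::finite) set"
  assumes S: "open S" and f: "smooth_on S f" and h: "smooth_on S h"
  shows "smooth_on S (\<lambda>y. f y + h y)"
proof (rule alg_smooth[OF S open_UNIV, where g="\<lambda>_. 0::real^'n"])
  show "\<forall>j. smooth_on S (\<lambda>y. (0::real^'n) $ j)" by (simp add: smooth_const)
  show "(\<lambda>y. f y + h y) \<in> alg S UNIV (\<lambda>_. 0::real^'n)"
    by (rule alg.add; rule alg.base; fact)
qed simp

lemma smooth_mult:
  fixes S :: "(real^'n::finite) set"
  assumes S: "open S" and f: "smooth_on S f" and h: "smooth_on S h"
  shows "smooth_on S (\<lambda>y. f y * h y)"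
proof (rule alg_smooth[OF S open_UNIV, where g="\<lambda>_. 0::real^'n"])
  show "\<forall>j. smooth_on S (\<lambda>y. (0::real^'n) $ j)" by (simp add: smooth_const)
  show "(\<lambda>y. f y * h y) \<in> alg S UNIV (\<lambda>_. 0::real^'n)"
    by (rule alg.mult; rule alg.base; fact)
qed simp

lemma smooth_coord: "smooth_on S (\<lambda>y::real^'n::finite. y $ j)"
proof (rule smooth_on.coinduct[where X="\<lambda>S' h. S' = S \<and> (\<exists>j. h = (\<lambda>y::real^'n. y $ j))"])
  show "S = S \<and> (\<exists>j'. (\<lambda>y::real^'n. y $ j) = (\<lambda>y. y $ j'))" by blast
next
  fix S0 and h0 :: "real^'n \<Rightarrow> real"
  assume a: "S0 = S \<and> (\<exists>j. h0 = (\<lambda>y::real^'n. y $ j))"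
  then obtain j where j: "h0 = (\<lambda>y. y $ j)" by blast
  have d: "(h0 has_derivative (\<lambda>v. v $ j)) (at x)" for x
    unfolding j by (intro bounded_linear_imp_has_derivative bounded_linear_vec_nth)
  have "pd k h0 = (\<lambda>x. (if k = j then 1 else 0))" for k
    using pd_eq[OF d] by (auto simp: axis_def)
  then have "smooth_on S0 (pd k h0)" for k by (simp add: smooth_const)
  moreover have "h0 differentiable_on S0"
    using d differentiable_at_imp_differentiable_on differentiable_def by blast
  ultimately show "\<exists>f Sa. S0 = Sa \<and> h0 = f \<and> f differentiable_on Sa \<and> (\<forall>k. (Sa = S \<and> (\<exists>j. pd k f = (\<lambda>y. y $ j))) \<or> smooth_on Sa (pd k f))"
    by blast
qed

definition S3 :: "(real^3) set" where "S3 = {y. 0 < y $ 1}"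

lemma open_S3: "open S3"
  unfolding S3_def by (intro open_Collect_less continuous_intros)

lemma deriv_invpow:
  assumes "t \<noteq> 0"
  shows "((\<lambda>t::real. c * inverse t ^ n) has_real_derivative (- c * real n * inverse t ^ Suc n)) (at t)"
proof -
  have "((\<lambda>t::real. c * inverse t ^ n) has_real_derivative c * (real n * (inverse t ^ (n - Suc 0)) * - (inverse t ^ Suc (Suc 0)))) (at t)"
    by (rule DERIV_cmult, rule DERIV_chain2[OF DERIV_pow DERIV_inverse[OF assms]])
  moreover have "c * (real n * (inverse t ^ (n - Suc 0)) * - (inverse t ^ Suc (Suc 0))) = - c * real n * inverse t ^ Suc n"
    by (cases n) (simp_all add: algebra_simps)
  ultimately show ?thesis by (rule DERIV_cong)
qed

lemma smooth_invpow: "smooth_on S3 (\<lambda>y. inverse (y $ 1))"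
proof (rule smooth_on.coinduct[where X="\<lambda>S' h. S' = S3 \<and> (\<exists>c n. \<forall>y\<in>S3. h y = c * inverse (y $ 1) ^ n)"])
  show "S3 = S3 \<and> (\<exists>c n. \<forall>y\<in>S3. inverse (y $ 1) = c * inverse (y $ 1) ^ n)"
    by (auto intro!: exI[of _ 1])
next
  fix S0 and h0 :: "real^3 \<Rightarrow> real"
  assume a: "S0 = S3 \<and> (\<exists>c n. \<forall>y\<in>S3. h0 y = c * inverse (y $ 1) ^ n)"
  then obtain c n where cn: "\<forall>y\<in>S3. h0 y = c * inverse (y $ 1) ^ n" and S0: "S0 = S3" by blast
  define \<phi> where "\<phi> = (\<lambda>y::real^3. c * inverse (y $ 1) ^ n)"
  have d: "(\<phi> has_derivative (\<lambda>v. v $ 1 * (- c * real n * inverse (y $ 1) ^ Suc n))) (at y)"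
    if "y \<in> S3" for y
    unfolding \<phi>_def
    by (rule DERIV_compose_FDERIV[OF deriv_invpow]) (use that in \<open>auto simp: S3_def intro: bounded_linear_imp_has_derivative bounded_linear_vec_nth\<close>)
  have "h0 differentiable_on S3"
    by (rule diffon_cong[OF open_S3, where f=\<phi>])
       (use cn d in \<open>auto simp: \<phi>_def differentiable_at_imp_differentiable_on differentiable_on_eq_differentiable_at[OF open_S3] differentiable_def\<close>)
  moreover have "\<exists>c n. \<forall>y\<in>S3. pd k h0 y = c * inverse (y $ 1) ^ n" for k
  proof -
    have "pd k h0 y = (if k = 1 then - c * real n * inverse (y $ 1) ^ Suc n else 0)" if y: "y \<in> S3" for y
    proof -
      have "pd k h0 y = pd k \<phi> y"
        by (rule pd_cong[OF open_S3 y]) (use cn d[OF y] in \<open>auto simp: \<phi>_def differentiable_def\<close>)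
      also have "\<dots> = (if k = 1 then - c * real n * inverse (y $ 1) ^ Suc n else 0)"
        using pd_eq[OF d[OF y]] by (simp add: axis_def)
      finally show ?thesis .
    qed
    note P = this
    show ?thesis
    proof (cases "k = 1")
      case True
      show ?thesis
        by (rule exI[of _ "- c * real n"], rule exI[of _ "Suc n"]) (use P True in simp)
    next
      case False
      show ?thesis
        by (rule exI[of _ 0], rule exI[of _ 0]) (use P False in simp)
    qed
  qed
  ultimately have R: "h0 differentiable_on S3" "\<And>k. (\<exists>c n. \<forall>y\<in>S3. pd k h0 y = c * inverse (y $ 1) ^ n)"
    by simp_all
  show "\<exists>f Sa. S0 = Sa \<and> h0 = f \<and> f differentiable_on Sa \<and> (\<forall>k. (Sa = S3 \<and> (\<exists>c n. \<forall>y\<in>S3. pd k f y = c * inverse (y $ 1) ^ n)) \<or> smooth_on Sa (pd k f))"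
    unfolding S0 by (rule exI[of _ h0], rule exI[of _ S3]) (simp add: R)
qed




lemma cases4: fixes k :: 4 obtains "k = 1" | "k = 2" | "k = 3" | "k = 4"
  using exhaust_4[of k] by blast

definition Gam :: "real^3 \<Rightarrow> real \<Rightarrow> real^4" where
  "Gam p s = (\<chi> k. if k = 1 then - p$1 * s else if k = 2 then (p$3 - p$1^2 * s^2 / 2) / p$1
     else if k = 3 then p$2 else p$1 - (p$3 - p$1^2 * s^2 / 2) / p$1)"

lemma Gam_nth: "Gam p s $ 1 = - p$1 * s" "Gam p s $ 2 = (p$3 - p$1^2 * s^2 / 2) / p$1"
  "Gam p s $ 3 = p$2" "Gam p s $ 4 = p$1 - (p$3 - p$1^2 * s^2 / 2) / p$1"
  by (simp_all add: Gam_def)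

definition PP :: "real^4 \<Rightarrow> real^3" where
  "PP x = vector [x$2 + x$4, x$3, (x$1)^2 / 2 + x$2 * (x$2 + x$4)]"

definition T2 :: "real^4 \<Rightarrow> real" where
  "T2 x = - x$1 / (x$2 + x$4)"

lemma Gam_PP: assumes "x$2 + x$4 > 0" shows "Gam (PP x) (T2 x) = x"
proof -
  define t where "t = x$2 + x$4"
  have ne: "t \<noteq> 0" using assms by (simp add: t_def)
  have h: "t^2 * (- x$1 / t)^2 = (x$1)^2" using ne by (simp add: power_divide)
  have c1: "Gam (PP x) (T2 x) $ 1 = x$1"
    using ne by (simp add: Gam_nth PP_def T2_def flip: t_def)
  have "Gam (PP x) (T2 x) $ 2 = ((x$1)^2/2 + x$2 * t - t^2 * (- x$1/t)^2/2) / t"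
    by (simp add: Gam_nth PP_def T2_def t_def)
  also have "\<dots> = ((x$1)^2/2 + x$2 * t - (x$1)^2/2) / t" unfolding h ..
  also have "\<dots> = x$2" using ne by simp
  finally have c2: "Gam (PP x) (T2 x) $ 2 = x$2" .
  have c3: "Gam (PP x) (T2 x) $ 3 = x$3" by (simp add: Gam_nth PP_def)
  have "Gam (PP x) (T2 x) $ 4 = t - Gam (PP x) (T2 x) $ 2"
    by (simp add: Gam_nth PP_def T2_def t_def)
  then have c4: "Gam (PP x) (T2 x) $ 4 = x$4" using c2 by (simp add: t_def)
  show ?thesis unfolding vec_eq_iff forall_4 using c1 c2 c3 c4 by simp
qed

lemma PP_Gam: assumes "p$1 > 0" shows "PP (Gam p s) = p" "T2 (Gam p s) = s"
  "Gam p s $ 2 + Gam p s $ 4 = p$1"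
proof -
  have ne: "p$1 \<noteq> 0" using assms by simp
  show "PP (Gam p s) = p"
    unfolding vec_eq_iff forall_3 using ne
    by (simp add: Gam_nth PP_def field_simps power2_eq_square)
  show "Gam p s $ 2 + Gam p s $ 4 = p$1" by (simp add: Gam_nth)
  then show "T2 (Gam p s) = s" using ne by (simp add: T2_def Gam_nth)
qed

definition xi0 :: "4 \<Rightarrow> real^4 \<Rightarrow> real" where
  "xi0 k x = e12 k x - e14 k x"

lemma xi0_simps: "xi0 1 x = - x$2 - x$4" "xi0 2 x = x$1" "xi0 3 x = 0" "xi0 4 x = - x$1"
  by (simp_all add: xi0_def e12_def e14_def)

lemma xi0_lin: "(xi0 k has_derivative xi0 k) (at x)"
proof -
  have "bounded_linear (xi0 k)"
  proof (cases k rule: cases4)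
    case 1
    have "xi0 k = (\<lambda>x. - x$2 - x$4)" using 1 by (simp add: fun_eq_iff xi0_simps)
    then show ?thesis by (simp add: bounded_linear_sub bounded_linear_minus bounded_linear_vec_nth)
  next
    case 2
    have "xi0 k = (\<lambda>x. x$1)" using 2 by (simp add: fun_eq_iff xi0_simps)
    then show ?thesis by (simp add: bounded_linear_vec_nth)
  next
    case 3
    have "xi0 k = (\<lambda>x. 0)" using 3 by (simp add: fun_eq_iff xi0_simps)
    then show ?thesis by (simp add: bounded_linear_zero)
  next
    case 4
    have "xi0 k = (\<lambda>x. - x$1)" using 4 by (simp add: fun_eq_iff xi0_simps)
    then show ?thesis by (simp add: bounded_linear_minus bounded_linear_vec_nth)
  qed
  then show ?thesis by (rule bounded_linear_imp_has_derivative)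
qed

definition DA :: "(4 \<Rightarrow> real^4 \<Rightarrow> real) \<Rightarrow> 4 \<Rightarrow> real^4 \<Rightarrow> real" where
  "DA A i x = (\<Sum>k\<in>UNIV. xi0 k x * pd k (A i) x)"

lemma lie_expand:
  "lie_deriv xi0 A i x = DA A i x + (\<Sum>k\<in>UNIV. A k x * xi0 k (axis i 1))"
  unfolding lie_deriv_def DA_def sum.distrib pd_eq[OF xi0_lin] ..

lemma lie_1: "lie_deriv xi0 A 1 x = DA A 1 x + A 2 x - A 4 x"
  and lie_2: "lie_deriv xi0 A 2 x = DA A 2 x - A 1 x"
  and lie_3: "lie_deriv xi0 A 3 x = DA A 3 x"
  and lie_4: "lie_deriv xi0 A 4 x = DA A 4 x - A 1 x"
  by (simp_all add: lie_expand sum_4 xi0_simps axis_def)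

lemma Gam_deriv:
  assumes "p$1 \<noteq> 0"
  shows "(Gam p has_vector_derivative (\<chi> k. xi0 k (Gam p s))) (at s)"
  unfolding has_vector_derivative_def
proof (rule has_derivative_vec_lambdaI)
  fix j :: 4
  have "((\<lambda>s. Gam p s $ j) has_real_derivative xi0 j (Gam p s)) (at s)"
  proof (cases j rule: cases4)
    case 1
    show ?thesis unfolding 1 Gam_nth xi0_simps
      by (rule derivative_eq_intros refl | simp)+
  next
    case 2
    show ?thesis unfolding 2 Gam_nth xi0_simps using assms
      by (auto intro!: derivative_eq_intros simp: field_simps power2_eq_square)
  next
    case 3
    show ?thesis unfolding 3 Gam_nth xi0_simps
      by (rule derivative_eq_intros refl | simp)+
  next
    case 4
    show ?thesis unfolding 4 Gam_nth xi0_simps using assms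
      by (auto intro!: derivative_eq_intros simp: field_simps power2_eq_square)
  qed
  moreover have "(\<lambda>h. (h *\<^sub>R (\<chi> k. xi0 k (Gam p s))) $ j) = (*) (xi0 j (Gam p s))"
    by (rule ext) (simp add: mult.commute)
  ultimately show "((\<lambda>s. Gam p s $ j) has_derivative (\<lambda>h. (h *\<^sub>R (\<chi> k. xi0 k (Gam p s))) $ j)) (at s)"
    unfolding has_field_derivative_def by simp
qed

lemma chain_curve:
  fixes f :: "real^'n::finite \<Rightarrow> real"
  assumes "f differentiable (at (\<gamma> s))" "(\<gamma> has_vector_derivative v) (at s)"
  shows "((\<lambda>s. f (\<gamma> s)) has_real_derivative (\<Sum>k\<in>UNIV. v$k * pd k f (\<gamma> s))) (at s)"
proof -
  have fd: "(f has_derivative frechet_derivative f (at (\<gamma> s))) (at (\<gamma> s))"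
    using assms(1) frechet_derivative_works by blast
  have lin: "linear (frechet_derivative f (at (\<gamma> s)))"
    using fd has_derivative_linear by blast
  have "((\<lambda>s. f (\<gamma> s)) has_derivative (\<lambda>t. frechet_derivative f (at (\<gamma> s)) (t *\<^sub>R v))) (at s)"
    using has_derivative_compose[OF assms(2)[unfolded has_vector_derivative_def] fd] by simp
  moreover have "(\<lambda>t. frechet_derivative f (at (\<gamma> s)) (t *\<^sub>R v)) = (*) (\<Sum>k\<in>UNIV. v$k * pd k f (\<gamma> s))"
    using pd_expand[OF assms(1)] linear_scale[OF lin] by (simp add: fun_eq_iff mult.commute)
  ultimately show ?thesis unfolding has_field_derivative_def by simp
qed

lemma ode:
  fixes a1 a2 a3 a4 :: "real \<Rightarrow> real"
  assumes d1: "\<And>s. (a1 has_real_derivative a4 s - a2 s) (at s)"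
    and d2: "\<And>s. (a2 has_real_derivative a1 s) (at s)"
    and d3: "\<And>s. (a3 has_real_derivative 0) (at s)"
    and d4: "\<And>s. (a4 has_real_derivative a1 s) (at s)"
  shows "a4 s - a2 s = a4 0 - a2 0" "a1 s = (a4 0 - a2 0) * s + a1 0"
    "a2 s = (a4 0 - a2 0) * s^2 / 2 + a1 0 * s + a2 0" "a3 s = a3 0"
proof -
  define c where "c = a4 0 - a2 0"
  have e1: "a4 t - a2 t = c" for t
  proof -
    have "\<forall>t. ((\<lambda>t. a4 t - a2 t) has_real_derivative 0) (at t)"
      using DERIV_diff[OF d4 d2] by simp
    then show ?thesis unfolding c_def by (rule DERIV_isconst_all)
  qed
  then show "a4 s - a2 s = a4 0 - a2 0" unfolding c_def .
  have e2: "a1 t = c * t + a1 0" for t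
  proof -
    have "\<forall>t. ((\<lambda>t. a1 t - c * t) has_real_derivative 0) (at t)"
    proof
      fix t
      show "((\<lambda>t. a1 t - c * t) has_real_derivative 0) (at t)"
      proof (rule DERIV_cong)
        show "((\<lambda>t. a1 t - c * t) has_real_derivative (a4 t - a2 t - c * 1)) (at t)"
          by (intro DERIV_diff d1 DERIV_cmult DERIV_ident)
      qed (use e1[of t] in simp)
    qed
    from DERIV_isconst_all[OF this, of t 0] show ?thesis by simp
  qed
  then show "a1 s = (a4 0 - a2 0) * s + a1 0" unfolding c_def .
  have "\<forall>t. ((\<lambda>t. a2 t - c * t^2 / 2 - a1 0 * t) has_real_derivative 0) (at t)"
  proof
    fix t
    show "((\<lambda>t. a2 t - c * t^2 / 2 - a1 0 * t) has_real_derivative 0) (at t)"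
      using e2[of t] by (auto intro!: derivative_eq_intros d2)
  qed
  from DERIV_isconst_all[OF this, of s 0]
  show "a2 s = (a4 0 - a2 0) * s^2 / 2 + a1 0 * s + a2 0" unfolding c_def by simp
  show "a3 s = a3 0" using DERIV_isconst_all[of a3 s 0] d3 by blast
qed




definition gbase :: "real^3 \<Rightarrow> real^4" where "gbase p = Gam p 0"

lemma gbase_smooth: "\<forall>j. smooth_on S3 (\<lambda>y. gbase y $ j)"
proof
  fix j :: 4
  have e1: "(\<lambda>y. gbase y $ 1) = (\<lambda>y. 0)" unfolding gbase_def Gam_nth by (rule ext) simp
  have e2: "(\<lambda>y. gbase y $ 2) = (\<lambda>y. y$3 * inverse (y$1))" unfolding gbase_def Gam_nth
    by (rule ext) (simp only: power_zero_numeral mult_zero_right div_0 diff_zero divide_inverse mult_zero_left minus_zero add_0_right)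
  have e3: "(\<lambda>y. gbase y $ 3) = (\<lambda>y. y$2)" unfolding gbase_def Gam_nth by (rule ext) simp
  have e4: "(\<lambda>y. gbase y $ 4) = (\<lambda>y. y$1 + (-1) * (y$3 * inverse (y$1)))" unfolding gbase_def Gam_nth
    by (rule ext) (simp only: power_zero_numeral mult_zero_right div_0 diff_zero divide_inverse mult_minus1 diff_conv_add_uminus mult_zero_left minus_zero add_0_right)
  have s2: "smooth_on S3 (\<lambda>y. y$3 * inverse (y$1))"
    by (rule smooth_mult[OF open_S3 smooth_coord smooth_invpow])
  show "smooth_on S3 (\<lambda>y. gbase y $ j)"
  proof (cases j rule: cases4)
    case 1 show ?thesis unfolding 1 e1 by (rule smooth_const)
  next
    case 2 show ?thesis unfolding 2 e2 by (rule s2)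
  next
    case 3 show ?thesis unfolding 3 e3 by (rule smooth_coord)
  next
    case 4
    have "smooth_on S3 (\<lambda>y. y$1 + (-1) * (y$3 * inverse (y$1)))"
      by (rule smooth_add[OF open_S3 smooth_coord smooth_mult[OF open_S3 smooth_const s2]])
    then show ?thesis unfolding 4 e4 .
  qed
qed


theorem mainTheorem3:
  fixes A :: "4 \<Rightarrow> real^4 \<Rightarrow> real"
  defines "U \<equiv> {x::real^4. x$2 + x$4 > 0}"
      and "\<xi> \<equiv> (\<lambda>k x. e12 k x - e14 k x)"
  assumes smoothA: "\<forall>i. smooth_on U (A i)"
  shows "(\<forall>i. \<forall>x\<in>U. lie_deriv \<xi> A i x = 0) \<longleftrightarrow>
    (\<exists>C1 C2 C3 B :: real^3 \<Rightarrow> real.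
       smooth_on {y. y$1 > 0} C1 \<and> smooth_on {y. y$1 > 0} C2 \<and>
       smooth_on {y. y$1 > 0} C3 \<and> smooth_on {y. y$1 > 0} B \<and>
       (\<forall>x\<in>U.
          (let t1 = x$2 + x$4; t2 = - x$1 / t1; t3 = x$3;
               t4 = (x$1)^2 / 2 + x$2 * t1;
               p = vector [t1, t3, t4] :: real^3
           in A 1 x = C2 p * t2 + C3 p \<and>
              A 2 x = C2 p * t2^2 / 2 + C3 p * t2 + C1 p \<and>
              A 3 x = B p \<and>
              A 4 x = A 2 x + C2 p)))"
proof -
  have xi: "\<xi> = xi0" unfolding \<xi>_def xi0_def by (simp add: fun_eq_iff)
  have S3e: "{y::real^3. y$1 > 0} = S3" by (simp add: S3_def)
  have openU: "open U" unfolding U_def by (intro open_Collect_less continuous_intros)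
  have Adiff: "A i differentiable (at x)" if "x \<in> U" for i x
    using smooth_onD[of U "A i"] smoothA that differentiable_on_eq_differentiable_at[OF openU] by blast
  have GamU: "Gam p s \<in> U" if "p$1 > 0" for p s
    using PP_Gam(3)[OF that, of s] that by (simp add: U_def)
  have DAc: "((\<lambda>s. A i (Gam p s)) has_real_derivative DA A i (Gam p s)) (at s)" if "p$1 > 0" for p s i
  proof -
    have "p$1 \<noteq> 0" using that by simp
    from chain_curve[OF Adiff[OF GamU[OF that]] Gam_deriv[OF this]]
    show ?thesis by (simp add: DA_def)
  qed
  have letEq: "(let t1 = x$2 + x$4; t2 = - x$1 / t1; t3 = x$3;
               t4 = (x$1)^2 / 2 + x$2 * t1;
               p = vector [t1, t3, t4] :: real^3
           in A 1 x = C2 p * t2 + C3 p \<and>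
              A 2 x = C2 p * t2^2 / 2 + C3 p * t2 + C1 p \<and>
              A 3 x = B p \<and>
              A 4 x = A 2 x + C2 p) \<longleftrightarrow>
         (A 1 x = C2 (PP x) * T2 x + C3 (PP x) \<and>
              A 2 x = C2 (PP x) * (T2 x)^2 / 2 + C3 (PP x) * T2 x + C1 (PP x) \<and>
              A 3 x = B (PP x) \<and>
              A 4 x = A 2 x + C2 (PP x))" for x and C1 C2 C3 B :: "real^3 \<Rightarrow> real"
    by (simp add: Let_def PP_def T2_def)
  have PP1: "PP x $ 1 > 0" if "x \<in> U" for x using that by (simp add: PP_def U_def)
  show ?thesis
    unfolding letEq S3e
  proof
    assume H: "\<forall>i. \<forall>x\<in>U. lie_deriv \<xi> A i x = 0"
    define gb where "gb = gbase"
    have gbU: "\<forall>y\<in>S3. gb y \<in> U" using GamU by (simp add: gb_def gbase_def S3_def)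
    have gbs: "\<forall>j. smooth_on S3 (\<lambda>y. gb y $ j)" unfolding gb_def by (rule gbase_smooth)
    have sc: "smooth_on S3 (\<lambda>p. A i (gb p))" for i
      by (rule smooth_comp[OF open_S3 openU gbU gbs]) (use smoothA in blast)
    define C1 where "C1 p = A 2 (gb p)" for p
    define C2 where "C2 p = A 4 (gb p) - A 2 (gb p)" for p
    define C3 where "C3 p = A 1 (gb p)" for p
    define B where "B p = A 3 (gb p)" for p
    have sC2: "smooth_on S3 C2"
    proof -
      have "smooth_on S3 (\<lambda>p. A 4 (gb p) + (-1) * A 2 (gb p))"
        by (rule smooth_add[OF open_S3 sc smooth_mult[OF open_S3 smooth_const sc]])
      moreover have "C2 = (\<lambda>p. A 4 (gb p) + (-1) * A 2 (gb p))" by (simp add: C2_def fun_eq_iff)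
      ultimately show ?thesis by simp
    qed
    have sC1: "smooth_on S3 C1" using sc[of 2] by (simp add: C1_def[abs_def])
    have sC3: "smooth_on S3 C3" using sc[of 1] by (simp add: C3_def[abs_def])
    have sB: "smooth_on S3 B" using sc[of 3] by (simp add: B_def[abs_def])
    have rel: "\<forall>x\<in>U. A 1 x = C2 (PP x) * T2 x + C3 (PP x) \<and>
              A 2 x = C2 (PP x) * (T2 x)^2 / 2 + C3 (PP x) * T2 x + C1 (PP x) \<and>
              A 3 x = B (PP x) \<and>
              A 4 x = A 2 x + C2 (PP x)"
    proof
      fix x assume xU: "x \<in> U"
      define p where "p = PP x"
      have p1: "p$1 > 0" using PP1[OF xU] by (simp add: p_def)
      have L: "lie_deriv xi0 A i (Gam p s) = 0" for i s using H GamU[OF p1] by (simp add: xi)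
      have d1: "((\<lambda>s. A 1 (Gam p s)) has_real_derivative A 4 (Gam p s) - A 2 (Gam p s)) (at s)" for s
      proof (rule DERIV_cong[OF DAc[OF p1, of 1 s]])
        show "DA A 1 (Gam p s) = A 4 (Gam p s) - A 2 (Gam p s)" using L[of 1 s] lie_1[of A "Gam p s"] by linarith
      qed
      have d2: "((\<lambda>s. A 2 (Gam p s)) has_real_derivative A 1 (Gam p s)) (at s)" for s
      proof (rule DERIV_cong[OF DAc[OF p1, of 2 s]])
        show "DA A 2 (Gam p s) = A 1 (Gam p s)" using L[of 2 s] lie_2[of A "Gam p s"] by linarith
      qed
      have d3: "((\<lambda>s. A 3 (Gam p s)) has_real_derivative 0) (at s)" for s
      proof (rule DERIV_cong[OF DAc[OF p1, of 3 s]])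
        show "DA A 3 (Gam p s) = 0" using L[of 3 s] lie_3[of A "Gam p s"] by linarith
      qed
      have d4: "((\<lambda>s. A 4 (Gam p s)) has_real_derivative A 1 (Gam p s)) (at s)" for s
      proof (rule DERIV_cong[OF DAc[OF p1, of 4 s]])
        show "DA A 4 (Gam p s) = A 1 (Gam p s)" using L[of 4 s] lie_4[of A "Gam p s"] by linarith
      qed
      note O = ode[OF d1 d2 d3 d4, of "T2 x"]
      have gx: "Gam p (T2 x) = x" unfolding p_def by (rule Gam_PP) (use xU in \<open>simp add: U_def\<close>)
      have g0: "Gam p 0 = gb p" by (simp add: gb_def gbase_def)
      show "A 1 x = C2 (PP x) * T2 x + C3 (PP x) \<and>
              A 2 x = C2 (PP x) * (T2 x)^2 / 2 + C3 (PP x) * T2 x + C1 (PP x) \<and>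
              A 3 x = B (PP x) \<and>
              A 4 x = A 2 x + C2 (PP x)"
        using O unfolding gx g0 by (simp add: C1_def C2_def C3_def B_def flip: p_def)
    qed
    show "\<exists>C1 C2 C3 B. smooth_on S3 C1 \<and> smooth_on S3 C2 \<and> smooth_on S3 C3 \<and> smooth_on S3 B \<and>
       (\<forall>x\<in>U. A 1 x = C2 (PP x) * T2 x + C3 (PP x) \<and>
              A 2 x = C2 (PP x) * (T2 x)^2 / 2 + C3 (PP x) * T2 x + C1 (PP x) \<and>
              A 3 x = B (PP x) \<and>
              A 4 x = A 2 x + C2 (PP x))"
      using sC1 sC2 sC3 sB rel by blast
  next
    assume "\<exists>C1 C2 C3 B. smooth_on S3 C1 \<and> smooth_on S3 C2 \<and> smooth_on S3 C3 \<and> smooth_on S3 B \<and>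
       (\<forall>x\<in>U. A 1 x = C2 (PP x) * T2 x + C3 (PP x) \<and>
              A 2 x = C2 (PP x) * (T2 x)^2 / 2 + C3 (PP x) * T2 x + C1 (PP x) \<and>
              A 3 x = B (PP x) \<and>
              A 4 x = A 2 x + C2 (PP x))"
    then obtain C1 C2 C3 B :: "real^3 \<Rightarrow> real" where
      R: "\<forall>x\<in>U. A 1 x = C2 (PP x) * T2 x + C3 (PP x) \<and>
              A 2 x = C2 (PP x) * (T2 x)^2 / 2 + C3 (PP x) * T2 x + C1 (PP x) \<and>
              A 3 x = B (PP x) \<and>
              A 4 x = A 2 x + C2 (PP x)" by blast
    show "\<forall>i. \<forall>x\<in>U. lie_deriv \<xi> A i x = 0"
    proof (intro allI ballI)
      fix i x assume xU: "x \<in> U"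
      define p where "p = PP x"
      define s0 where "s0 = T2 x"
      have p1: "p$1 > 0" using PP1[OF xU] by (simp add: p_def)
      have gx: "Gam p s0 = x" unfolding p_def s0_def by (rule Gam_PP) (use xU in \<open>simp add: U_def\<close>)
      have Rs: "A 1 (Gam p s) = C2 p * s + C3 p \<and>
              A 2 (Gam p s) = C2 p * s^2 / 2 + C3 p * s + C1 p \<and>
              A 3 (Gam p s) = B p \<and>
              A 4 (Gam p s) = A 2 (Gam p s) + C2 p" for s
        using R GamU[OF p1, of s] PP_Gam[OF p1, of s] by simp
      have f1: "(\<lambda>s. A 1 (Gam p s)) = (\<lambda>s. C2 p * s + C3 p)" using Rs by (simp add: fun_eq_iff)
      have f2: "(\<lambda>s. A 2 (Gam p s)) = (\<lambda>s. C2 p * s^2 / 2 + C3 p * s + C1 p)" using Rs by (simp add: fun_eq_iff)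
      have f3: "(\<lambda>s. A 3 (Gam p s)) = (\<lambda>s. B p)" using Rs by (simp add: fun_eq_iff)
      have f4: "(\<lambda>s. A 4 (Gam p s)) = (\<lambda>s. C2 p * s^2 / 2 + C3 p * s + C1 p + C2 p)" using Rs by (simp add: fun_eq_iff)
      have e1: "((\<lambda>s. C2 p * s + C3 p) has_real_derivative C2 p) (at s0)"
        by (auto intro!: derivative_eq_intros)
      have e2: "((\<lambda>s. C2 p * s^2 / 2 + C3 p * s + C1 p) has_real_derivative C2 p * s0 + C3 p) (at s0)"
        by (auto intro!: derivative_eq_intros)
      have e3: "((\<lambda>s. B p) has_real_derivative 0) (at s0)"
        by (auto intro!: derivative_eq_intros)
      have e4: "((\<lambda>s. C2 p * s^2 / 2 + C3 p * s + C1 p + C2 p) has_real_derivative C2 p * s0 + C3 p) (at s0)"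
        by (auto intro!: derivative_eq_intros)
      have D1: "DA A 1 x = C2 p" using DERIV_unique[OF DAc[OF p1, of 1 s0] e1[folded f1]] gx by simp
      have D2: "DA A 2 x = C2 p * s0 + C3 p" using DERIV_unique[OF DAc[OF p1, of 2 s0] e2[folded f2]] gx by simp
      have D3: "DA A 3 x = 0" using DERIV_unique[OF DAc[OF p1, of 3 s0] e3[folded f3]] gx by simp
      have D4: "DA A 4 x = C2 p * s0 + C3 p" using DERIV_unique[OF DAc[OF p1, of 4 s0] e4[folded f4]] gx by simp
      have Rx: "A 1 x = C2 p * s0 + C3 p" "A 4 x = A 2 x + C2 p"
        using R xU by (simp_all add: p_def s0_def)
      show "lie_deriv \<xi> A i x = 0"
        unfolding xi
        by (cases i rule: cases4) (simp_all add: lie_1 lie_2 lie_3 lie_4 D1 D2 D3 D4 Rx)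
    qed
  qed
qed


end
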